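(* Let $q$ be a prime power and $F/\mathbb{F}_q$ an algebraic function field with full constant field $\mathbb{F}_q$ of genus $g\geq 2$. For $n\geq 0$ let $A_n$ be the number of effective divisors of degree $n$ of $F$, for $r\geq1$ let $B_r$ be the number of places of degree $r$ of $F$, let $\Sigma_1=\sum_{n=0}^{g-1}A_n$, let $\Delta_1=\{r: 1\leq r\leq g-1,\ B_r\geq 1\}$ and $\Delta_1'=\Delta_1\setminus\{1\}$. (1) Let $(m_r)_{r\in\Delta_1}$ be integers with $m_r\geq 0$ and $\sum_{r\in\Delta_1} r\,m_r\leq g-1$. Then $$\Sigma_1\geq\prod_{r\in\Delta_1}\binom{B_r+m_r}{m_r}.$$ (2) Suppose $B_1\geq 1$ and let $r_1,\dots,r_u$ be distinct elements of $\Delta_1'$. Then $$\Sigma_1\geq\binom{B_1+g-1}{g-1}+\sum_{i=1}^u\left(\binom{B_{r_i}+\lfloor\frac{g-1}{r_i}\rfloor}{\lfloor\frac{g-1}{r_i}\rfloor}-1\right)\binom{B_1+((g-1)\bmod r_i)}{(g-1)\bmod r_i}.$$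
   Context: $(g-1)\bmod r$ denotes the remainder of the Euclidean division of $g-1$ by $r$. *)

theory Defs
  imports Main
begin

text \<open>Abstract model of the place set of a function field F/F_q:
  a set P of places with a degree function deg (deg >= 1), finitely many
  places of each degree.\<close>

definition eff_divisors :: "'p set \<Rightarrow> ('p \<Rightarrow> nat) \<Rightarrow> nat \<Rightarrow> ('p \<Rightarrow> nat) set" where
  "eff_divisors P deg n =
     {D. (\<forall>x. x \<notin> P \<longrightarrow> D x = 0) \<and> finite {x. D x \<noteq> 0}
         \<and> (\<Sum>x\<in>{x. D x \<noteq> 0}. deg x * D x) = n}"

definition num_eff :: "'p set \<Rightarrow> ('p \<Rightarrow> nat) \<Rightarrow> nat \<Rightarrow> nat" where
  "num_eff P deg n = card (eff_divisors P deg n)"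

definition num_places :: "'p set \<Rightarrow> ('p \<Rightarrow> nat) \<Rightarrow> nat \<Rightarrow> nat" where
  "num_places P deg r = card {x\<in>P. deg x = r}"

definition Sigma1 :: "'p set \<Rightarrow> ('p \<Rightarrow> nat) \<Rightarrow> nat \<Rightarrow> nat" where
  "Sigma1 P deg g = (\<Sum>n = 0..g - 1. num_eff P deg n)"

definition Delta1 :: "'p set \<Rightarrow> ('p \<Rightarrow> nat) \<Rightarrow> nat \<Rightarrow> nat set" where
  "Delta1 P deg g = {r. 1 \<le> r \<and> r \<le> g - 1 \<and> num_places P deg r \<ge> 1}"

end

theory Submission
  imports Defs "HOL-Library.FuncSet"
begin

definition bnd :: "'a set \<Rightarrow> nat \<Rightarrow> ('a \<Rightarrow> nat) set" where
  "bnd A k = {D. (\<forall>x. x \<notin> A \<longrightarrow> D x = 0) \<and> sum D A \<le> k}"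

lemma card_bnd:
  assumes "finite A"
  shows "card (bnd A k) = (card A + k) choose k"
  using assms
proof (induction A arbitrary: k rule: finite_induct)
  case empty
  have h: "bnd {} k = {\<lambda>_. 0}" unfolding bnd_def by auto
  show ?case unfolding h by simp
next
  case (insert a A)
  have fin: "finite (bnd A j)" for j
    using insert.IH[of j] by (intro card_ge_0_finite) simp
  have bij: "bij_betw (\<lambda>D. (D a, D(a:=0))) (bnd (insert a A) k) (SIGMA j:{..k}. bnd A (k - j))"
  proof (rule bij_betw_byWitness[where f'="\<lambda>(j,E). E(a:=j)"])
    show "\<forall>D\<in>bnd (insert a A) k. (\<lambda>(j,E). E(a:=j)) (D a, D(a:=0)) = D" by auto
    show "\<forall>p\<in>(SIGMA j:{..k}. bnd A (k - j)). (\<lambda>D. (D a, D(a:=0))) ((\<lambda>(j,E). E(a:=j)) p) = p"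
      using insert.hyps unfolding bnd_def by (auto simp: fun_eq_iff)
    show "(\<lambda>D. (D a, D(a:=0))) ` bnd (insert a A) k \<subseteq> (SIGMA j:{..k}. bnd A (k - j))"
    proof
      fix p assume "p \<in> (\<lambda>D. (D a, D(a:=0))) ` bnd (insert a A) k"
      then obtain D where D: "D \<in> bnd (insert a A) k" and p: "p = (D a, D(a:=0))" by auto
      have s: "sum D (insert a A) = D a + sum D A" using insert.hyps by simp
      have "sum (D(a:=0)) A = sum D A" using insert.hyps by (intro sum.cong) auto
      then show "p \<in> (SIGMA j:{..k}. bnd A (k - j))"
        using D s unfolding p bnd_def by auto
    qed
    show "(\<lambda>(j,E). E(a:=j)) ` (SIGMA j:{..k}. bnd A (k - j)) \<subseteq> bnd (insert a A) k"
    proof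
      fix D assume "D \<in> (\<lambda>(j,E). E(a:=j)) ` (SIGMA j:{..k}. bnd A (k - j))"
      then obtain j E where j: "j \<le> k" and E: "E \<in> bnd A (k - j)" and D: "D = E(a:=j)" by auto
      have s: "sum D (insert a A) = D a + sum D A" using insert.hyps by simp
      have "sum D A = sum E A" using insert.hyps unfolding D by (intro sum.cong) auto
      then show "D \<in> bnd (insert a A) k" using s j E unfolding D bnd_def by auto
    qed
  qed
  have "card (bnd (insert a A) k) = card (SIGMA j:{..k}. bnd A (k - j))"
    using bij_betw_same_card[OF bij] .
  also have "\<dots> = (\<Sum>j\<le>k. card (bnd A (k - j)))" using fin by simp
  also have "\<dots> = (\<Sum>j\<le>k. (card A + (k - j)) choose (k - j))" using insert.IH by simp
  also have "\<dots> = (\<Sum>j<Suc k. (\<lambda>i. (card A + i) choose i) (Suc k - Suc j))"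
    by (simp add: lessThan_Suc_atMost)
  also have "\<dots> = (\<Sum>i<Suc k. (card A + i) choose i)" by (rule sum.nat_diff_reindex)
  also have "\<dots> = Suc (card A + k) choose k" by (simp add: lessThan_Suc_atMost sum_choose_lower)
  finally show ?case using insert.hyps by simp
qed

lemma finite_bnd: "finite A \<Longrightarrow> finite (bnd A k)"
  by (intro card_ge_0_finite) (simp add: card_bnd)

lemma zero_bnd: "(\<lambda>_. 0) \<in> bnd A k" unfolding bnd_def by simp


lemma supp_sum:
  assumes "finite F" "\<forall>x. x \<notin> F \<longrightarrow> D x = 0"
  shows "(\<Sum>x\<in>{x. D x \<noteq> 0}. h x * (D x::nat)) = (\<Sum>x\<in>F. h x * D x)"
  using assms by (intro sum.mono_neutral_left) auto

definition Sset :: "'p set \<Rightarrow> ('p \<Rightarrow> nat) \<Rightarrow> nat \<Rightarrow> ('p \<Rightarrow> nat) set" where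
  "Sset P deg g = {D. (\<forall>x. x \<notin> P \<longrightarrow> D x = 0) \<and> finite {x. D x \<noteq> 0}
         \<and> (\<Sum>x\<in>{x. D x \<noteq> 0}. deg x * D x) \<le> g - 1}"

lemma memS:
  assumes "finite F" "F \<subseteq> P" "\<forall>x. x \<notin> F \<longrightarrow> D x = 0" "(\<Sum>x\<in>F. deg x * D x) \<le> g - 1"
  shows "D \<in> Sset P deg g"
proof -
  have "{x. D x \<noteq> 0} \<subseteq> F" using assms(3) by auto
  then have "finite {x. D x \<noteq> 0}" using assms(1) finite_subset by blast
  then show ?thesis using assms supp_sum[OF assms(1,3), of deg] unfolding Sset_def by auto
qed

lemma Sset_finite:
  assumes deg_pos: "\<forall>x\<in>P. 1 \<le> deg x" and fin: "\<forall>r. finite {x\<in>P. deg x = r}"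
  shows "finite (Sset P deg g)"
proof -
  let ?U = "{x\<in>P. deg x \<le> g - 1}"
  have U: "?U = (\<Union>r\<in>{..g-1}. {x\<in>P. deg x = r})" by auto
  have fU: "finite ?U" unfolding U using fin by auto
  have "Sset P deg g \<subseteq> bnd ?U (g - 1)"
  proof
    fix D assume D: "D \<in> Sset P deg g"
    let ?S = "{x. D x \<noteq> 0}"
    have fS: "finite ?S" and sP: "\<forall>x. x \<notin> P \<longrightarrow> D x = 0"
      and le: "(\<Sum>x\<in>?S. deg x * D x) \<le> g - 1" using D unfolding Sset_def by auto
    have mem: "deg x * D x \<le> g - 1" if "x \<in> ?S" for x
      using member_le_sum[OF that, of "\<lambda>x. deg x * D x", OF _ fS] le by simp
    have out: "D x = 0" if "x \<notin> ?U" for x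
    proof (rule ccontr)
      assume "D x \<noteq> 0"
      then have "x \<in> P" using sP by auto
      then have "deg x \<le> deg x * D x" using \<open>D x \<noteq> 0\<close> by simp
      with mem[of x] \<open>D x \<noteq> 0\<close> \<open>x \<in> P\<close> that show False by auto
    qed
    have "sum D ?U \<le> (\<Sum>x\<in>?U. deg x * D x)"
      by (intro sum_mono) (use deg_pos in auto)
    also have "\<dots> = (\<Sum>x\<in>?S. deg x * D x)"
      using supp_sum[OF fU, of D deg] out by simp
    finally show "D \<in> bnd ?U (g - 1)" unfolding bnd_def using out le by auto
  qed
  then show ?thesis using finite_bnd[OF fU] finite_subset by blast
qed

lemma Sigma1_eq:
  assumes deg_pos: "\<forall>x\<in>P. 1 \<le> deg x" and fin: "\<forall>r. finite {x\<in>P. deg x = r}"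
  shows "Sigma1 P deg g = card (Sset P deg g)"
proof -
  have eq: "Sset P deg g = (\<Union>n\<in>{0..g-1}. eff_divisors P deg n)"
    unfolding Sset_def eff_divisors_def by auto
  have fe: "finite (eff_divisors P deg n)" if "n \<in> {0..g-1}" for n
  proof -
    have "eff_divisors P deg n \<subseteq> Sset P deg g" using eq that by auto
    then show ?thesis using Sset_finite[OF assms] finite_subset by blast
  qed
  have "card (Sset P deg g) = (\<Sum>n\<in>{0..g-1}. card (eff_divisors P deg n))"
    unfolding eq by (rule card_UN_disjoint) (use fe in \<open>auto simp: eff_divisors_def\<close>)
  then show ?thesis unfolding Sigma1_def num_eff_def by simp
qed


lemma part1:
  assumes deg_pos: "\<forall>x\<in>P. 1 \<le> deg x" and fin: "\<forall>r. finite {x\<in>P. deg x = r}"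
    and msum: "(\<Sum>r\<in>Delta1 P deg g. r * m r) \<le> g - 1"
  shows "Sigma1 P deg g \<ge> (\<Prod>r\<in>Delta1 P deg g. (num_places P deg r + m r) choose (m r))"
proof -
  let ?D = "Delta1 P deg g"
  define Ar where "Ar r = {x\<in>P. deg x = r}" for r
  have "?D \<subseteq> {..g-1}" unfolding Delta1_def by auto
  then have fD: "finite ?D" by (rule finite_subset) simp
  have fA: "finite (Ar r)" for r unfolding Ar_def using fin by blast
  define X where "X = (\<Pi>\<^sub>E r\<in>?D. bnd (Ar r) (m r))"
  define \<Phi> where "\<Phi> f = (\<lambda>x. if x \<in> P \<and> deg x \<in> ?D then f (deg x) x else 0)" for f :: "nat \<Rightarrow> 'a \<Rightarrow> nat"
  have cX: "card X = (\<Prod>r\<in>?D. (num_places P deg r + m r) choose (m r))"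
  proof -
    have "num_places P deg r = card (Ar r)" for r unfolding num_places_def Ar_def by simp
    then show ?thesis unfolding X_def card_PiE[OF fD] by (simp add: card_bnd[OF fA])
  qed
  let ?U = "{x\<in>P. deg x \<in> ?D}"
  have "?U \<subseteq> (\<Union>r\<in>?D. Ar r)" unfolding Ar_def by auto
  moreover have "finite (\<Union>r\<in>?D. Ar r)" using fD fA by blast
  ultimately have fU: "finite ?U" by (rule finite_subset)
  have inS: "\<Phi> f \<in> Sset P deg g" if f: "f \<in> X" for f
  proof (rule memS[OF fU])
    show "?U \<subseteq> P" by auto
    show "\<forall>x. x \<notin> ?U \<longrightarrow> \<Phi> f x = 0" unfolding \<Phi>_def by auto
    have "(\<Sum>x\<in>?U. deg x * \<Phi> f x) = (\<Sum>r\<in>?D. \<Sum>x\<in>{x\<in>?U. deg x = r}. deg x * \<Phi> f x)"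
      by (rule sum.group[symmetric]) (use fU fD in auto)
    also have "\<dots> = (\<Sum>r\<in>?D. r * sum (f r) (Ar r))"
    proof (rule sum.cong[OF refl])
      fix r assume r: "r \<in> ?D"
      have e: "{x\<in>?U. deg x = r} = Ar r" using r unfolding Ar_def by auto
      have "(\<Sum>x\<in>Ar r. deg x * \<Phi> f x) = (\<Sum>x\<in>Ar r. r * f r x)"
        by (rule sum.cong[OF refl]) (use r in \<open>simp add: \<Phi>_def Ar_def\<close>)
      then show "(\<Sum>x\<in>{x\<in>?U. deg x = r}. deg x * \<Phi> f x) = r * sum (f r) (Ar r)"
        unfolding e by (simp add: sum_distrib_left)
    qed
    also have "\<dots> \<le> (\<Sum>r\<in>?D. r * m r)"
      using f by (intro sum_mono mult_left_mono) (auto simp: X_def bnd_def)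
    finally show "(\<Sum>x\<in>?U. deg x * \<Phi> f x) \<le> g - 1" using msum by simp
  qed
  have inj: "inj_on \<Phi> X"
  proof
    fix f f' assume f: "f \<in> X" and f': "f' \<in> X" and eq: "\<Phi> f = \<Phi> f'"
    show "f = f'"
    proof
      fix r show "f r = f' r"
      proof (cases "r \<in> ?D")
        case True
        show ?thesis
        proof
          fix x show "f r x = f' r x"
          proof (cases "x \<in> Ar r")
            case True
            then have "x \<in> P" "deg x = r" unfolding Ar_def by auto
            then show ?thesis using fun_cong[OF eq, of x] \<open>r \<in> ?D\<close> unfolding \<Phi>_def by simp
          next
            case False
            have "f r \<in> bnd (Ar r) (m r)" "f' r \<in> bnd (Ar r) (m r)"
              using PiE_mem[OF f[unfolded X_def] \<open>r \<in> ?D\<close>] PiE_mem[OF f'[unfolded X_def] \<open>r \<in> ?D\<close>] by auto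
            then show ?thesis using False unfolding bnd_def by auto
          qed
        qed
      next
        case False
        then show ?thesis using PiE_arb[OF f[unfolded X_def] False] PiE_arb[OF f'[unfolded X_def] False] by simp
      qed
    qed
  qed
  have "card X = card (\<Phi> ` X)" using card_image[OF inj] by simp
  also have "\<dots> \<le> card (Sset P deg g)"
    using inS Sset_finite[OF deg_pos fin] by (intro card_mono) auto
  finally show ?thesis using cX Sigma1_eq[OF deg_pos fin] by simp
qed


lemma part2:
  assumes deg_pos: "\<forall>x\<in>P. 1 \<le> deg x" and fin: "\<forall>r. finite {x\<in>P. deg x = r}"
    and R: "R \<subseteq> Delta1 P deg g - {1}"
  shows "int (Sigma1 P deg g) \<ge>
              int ((num_places P deg 1 + (g - 1)) choose (g - 1))
              + (\<Sum>r\<in>R. (int ((num_places P deg r + (g - 1) div r) choose ((g - 1) div r)) - 1)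
                          * int ((num_places P deg 1 + (g - 1) mod r) choose ((g - 1) mod r)))"
proof -
  let ?D = "Delta1 P deg g"
  define Ar where "Ar r = {x\<in>P. deg x = r}" for r
  have "?D \<subseteq> {..g-1}" unfolding Delta1_def by auto
  then have fD: "finite ?D" by (rule finite_subset) simp
  have "R \<subseteq> ?D" using R by blast
  then have fR: "finite R" using fD by (rule finite_subset)
  have fA: "finite (Ar r)" for r unfolding Ar_def using fin by blast
  have AP: "Ar r \<subseteq> P" for r unfolding Ar_def by auto
  have np: "num_places P deg r = card (Ar r)" for r unfolding num_places_def Ar_def by simp
  have Rr: "r \<noteq> 1" "1 \<le> r" if "r \<in> R" for r
  proof -
    have "r \<in> ?D - {1}" using that R by blast
    then show "r \<noteq> 1" "1 \<le> r" unfolding Delta1_def by auto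
  qed
  have disjA: "Ar r \<inter> Ar s = {}" if "r \<noteq> s" for r s using that unfolding Ar_def by auto
  define q where "q r = (g - 1) div r" for r :: nat
  define \<rho> where "\<rho> r = (g - 1) mod r" for r :: nat
  define Z where "Z = (\<lambda>_::'a. 0::nat)"
  define T where "T r = (\<lambda>(E,G). \<lambda>x. E x + G x) ` ((bnd (Ar r) (q r) - {Z}) \<times> bnd (Ar 1) (\<rho> r))" for r
  define S0 where "S0 = bnd (Ar 1) (g - 1)"
  have fS: "finite (Sset P deg g)" using Sset_finite[OF deg_pos fin] .
  have S0S: "S0 \<subseteq> Sset P deg g"
  proof
    fix D assume "D \<in> S0"
    then have D: "\<forall>x. x \<notin> Ar 1 \<longrightarrow> D x = 0" "sum D (Ar 1) \<le> g - 1" unfolding S0_def bnd_def by auto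
    have "(\<Sum>x\<in>Ar 1. deg x * D x) = sum D (Ar 1)" by (rule sum.cong) (auto simp: Ar_def)
    then show "D \<in> Sset P deg g" using memS[OF fA AP D(1)] D(2) by simp
  qed
  have TS: "T r \<subseteq> Sset P deg g" if r: "r \<in> R" for r
  proof
    fix D assume "D \<in> T r"
    then obtain E G where E: "E \<in> bnd (Ar r) (q r)" and G: "G \<in> bnd (Ar 1) (\<rho> r)"
      and D: "D = (\<lambda>x. E x + G x)" unfolding T_def by auto
    have E0: "\<forall>x. x \<notin> Ar r \<longrightarrow> E x = 0" and G0: "\<forall>x. x \<notin> Ar 1 \<longrightarrow> G x = 0"
      using E G unfolding bnd_def by auto
    have dj: "Ar r \<inter> Ar 1 = {}" using disjA Rr(1)[OF r] by blast
    have "(\<Sum>x\<in>Ar r \<union> Ar 1. deg x * D x) = (\<Sum>x\<in>Ar r. deg x * D x) + (\<Sum>x\<in>Ar 1. deg x * D x)"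
      by (rule sum.union_disjoint[OF fA fA dj])
    also have "(\<Sum>x\<in>Ar r. deg x * D x) = (\<Sum>x\<in>Ar r. r * E x)"
    proof (rule sum.cong[OF refl])
      fix x assume x: "x \<in> Ar r"
      then have "x \<notin> Ar 1" using dj by auto
      then show "deg x * D x = r * E x" using x G0 unfolding D Ar_def by auto
    qed
    also have "(\<Sum>x\<in>Ar 1. deg x * D x) = (\<Sum>x\<in>Ar 1. G x)"
    proof (rule sum.cong[OF refl])
      fix x assume x: "x \<in> Ar 1"
      then have "x \<notin> Ar r" using dj by auto
      then show "deg x * D x = G x" using x E0 unfolding D Ar_def by auto
    qed
    also have "(\<Sum>x\<in>Ar r. r * E x) = r * sum E (Ar r)" by (simp add: sum_distrib_left)
    also have "r * sum E (Ar r) + sum G (Ar 1) \<le> r * q r + \<rho> r"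
      using E G unfolding bnd_def by (intro add_mono mult_left_mono) auto
    also have "r * q r + \<rho> r = g - 1" unfolding q_def \<rho>_def by simp
    finally have le: "(\<Sum>x\<in>Ar r \<union> Ar 1. deg x * D x) \<le> g - 1" .
    show "D \<in> Sset P deg g"
      by (rule memS[OF _ _ _ le]) (use fA AP E0 G0 in \<open>auto simp: D\<close>)
  qed
  have cT: "card (T r) = (card (bnd (Ar r) (q r)) - 1) * card (bnd (Ar 1) (\<rho> r))" if r: "r \<in> R" for r
  proof -
    have dj: "Ar r \<inter> Ar 1 = {}" using disjA Rr(1)[OF r] by blast
    have "inj_on (\<lambda>(E,G). \<lambda>x. E x + G x) ((bnd (Ar r) (q r) - {Z}) \<times> bnd (Ar 1) (\<rho> r))"
    proof (rule inj_onI)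
      fix p p'
      assume pm: "p \<in> (bnd (Ar r) (q r) - {Z}) \<times> bnd (Ar 1) (\<rho> r)"
        and pm': "p' \<in> (bnd (Ar r) (q r) - {Z}) \<times> bnd (Ar 1) (\<rho> r)"
        and eq0: "(\<lambda>(E,G). \<lambda>x. E x + G x) p = (\<lambda>(E,G). \<lambda>x. E x + G x) p'"
      obtain E G where p: "p = (E,G)" by (cases p)
      obtain E' G' where p': "p' = (E',G')" by (cases p')
      have a: "E \<in> bnd (Ar r) (q r)" "G \<in> bnd (Ar 1) (\<rho> r)" "E' \<in> bnd (Ar r) (q r)" "G' \<in> bnd (Ar 1) (\<rho> r)"
        using pm pm' unfolding p p' by auto
      have eq: "(\<lambda>x. E x + G x) = (\<lambda>x. E' x + G' x)" using eq0 unfolding p p' by simp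
      have z: "\<forall>x. x \<notin> Ar r \<longrightarrow> E x = 0" "\<forall>x. x \<notin> Ar 1 \<longrightarrow> G x = 0"
        "\<forall>x. x \<notin> Ar r \<longrightarrow> E' x = 0" "\<forall>x. x \<notin> Ar 1 \<longrightarrow> G' x = 0"
        using a unfolding bnd_def by auto
      have "E x = E' x \<and> G x = G' x" for x
        using fun_cong[OF eq, of x] z dj by (cases "x \<in> Ar r"; cases "x \<in> Ar 1") auto
      then show "p = p'" unfolding p p' by auto
    qed
    then have "card (T r) = card ((bnd (Ar r) (q r) - {Z}) \<times> bnd (Ar 1) (\<rho> r))"
      unfolding T_def by (rule card_image)
    also have "\<dots> = card (bnd (Ar r) (q r) - {Z}) * card (bnd (Ar 1) (\<rho> r))"
      by (rule card_cartesian_product)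
    also have "card (bnd (Ar r) (q r) - {Z}) = card (bnd (Ar r) (q r)) - 1"
      using zero_bnd unfolding Z_def by (intro card_Diff_singleton) auto
    finally show ?thesis .
  qed
  have wit: "\<exists>x\<in>Ar r. D x \<noteq> 0 \<and> (\<forall>s. s \<noteq> r \<and> s \<noteq> 1 \<longrightarrow> (\<forall>y\<in>Ar s. D y = 0))
             \<and> (\<forall>y. y \<notin> Ar r \<union> Ar 1 \<longrightarrow> D y = 0)"
    if r: "r \<in> R" and D: "D \<in> T r" for r D
  proof -
    obtain E G where E: "E \<in> bnd (Ar r) (q r)" "E \<noteq> Z" and G: "G \<in> bnd (Ar 1) (\<rho> r)"
      and Dd: "D = (\<lambda>x. E x + G x)" using D unfolding T_def by auto
    have E0: "\<forall>x. x \<notin> Ar r \<longrightarrow> E x = 0" and G0: "\<forall>x. x \<notin> Ar 1 \<longrightarrow> G x = 0"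
      using E G unfolding bnd_def by auto
    obtain x where "E x \<noteq> 0" using E(2) unfolding Z_def by auto
    then have x: "x \<in> Ar r" "D x \<noteq> 0" using E0 Dd by auto
    have "\<forall>s. s \<noteq> r \<and> s \<noteq> 1 \<longrightarrow> (\<forall>y\<in>Ar s. D y = 0)"
    proof (intro allI impI ballI)
      fix s y assume s: "s \<noteq> r \<and> s \<noteq> 1" and y: "y \<in> Ar s"
      then have "y \<notin> Ar r" "y \<notin> Ar 1" using disjA by blast+
      then show "D y = 0" using E0 G0 Dd by simp
    qed
    moreover have "\<forall>y. y \<notin> Ar r \<union> Ar 1 \<longrightarrow> D y = 0" using E0 G0 Dd by simp
    ultimately show ?thesis using x by blast
  qed
  have dS0: "S0 \<inter> T r = {}" if r: "r \<in> R" for r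
  proof (rule ccontr)
    assume "S0 \<inter> T r \<noteq> {}"
    then obtain D where D0: "D \<in> S0" and D: "D \<in> T r" by auto
    obtain x where x: "x \<in> Ar r" "D x \<noteq> 0" using wit[OF r D] by blast
    have "x \<notin> Ar 1" using x(1) disjA Rr(1)[OF r] by blast
    then show False using D0 x(2) unfolding S0_def bnd_def by auto
  qed
  have dT: "T r \<inter> T s = {}" if r: "r \<in> R" and s: "s \<in> R" and rs: "r \<noteq> s" for r s
  proof (rule ccontr)
    assume "T r \<inter> T s \<noteq> {}"
    then obtain D where D: "D \<in> T r" and D': "D \<in> T s" by auto
    obtain x where x: "x \<in> Ar r" "D x \<noteq> 0" using wit[OF r D] by blast
    have "\<forall>s'. s' \<noteq> s \<and> s' \<noteq> 1 \<longrightarrow> (\<forall>y\<in>Ar s'. D y = 0)" using wit[OF s D'] by blast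
    then have "\<forall>y\<in>Ar r. D y = 0" using rs Rr(1)[OF r] by simp
    then show False using x by simp
  qed
  have fT: "finite (T r)" if "r \<in> R" for r by (rule finite_subset[OF TS[OF that] fS])
  have fS0: "finite S0" by (rule finite_subset[OF S0S fS])
  have cU: "card (\<Union>r\<in>R. T r) = (\<Sum>r\<in>R. card (T r))"
    by (rule card_UN_disjoint[OF fR]) (use fT dT in auto)
  have "card (S0 \<union> (\<Union>r\<in>R. T r)) = card S0 + card (\<Union>r\<in>R. T r)"
    by (rule card_Un_disjoint) (use fS0 fT fR dS0 in auto)
  moreover have "card (S0 \<union> (\<Union>r\<in>R. T r)) \<le> card (Sset P deg g)"
    by (rule card_mono[OF fS]) (use S0S TS in auto)
  ultimately have main: "card S0 + (\<Sum>r\<in>R. card (T r)) \<le> Sigma1 P deg g"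
    using cU Sigma1_eq[OF deg_pos fin] by simp
  have ge1: "card (bnd (Ar r) (q r)) \<ge> 1" for r
    using zero_bnd finite_bnd[OF fA] by (metis One_nat_def Suc_leI card_gt_0_iff empty_iff)
  have cTi: "int (card (T r)) = (int ((num_places P deg r + (g - 1) div r) choose ((g - 1) div r)) - 1)
                          * int ((num_places P deg 1 + (g - 1) mod r) choose ((g - 1) mod r))"
    if r: "r \<in> R" for r
  proof -
    have "int (card (T r)) = (int (card (bnd (Ar r) (q r))) - 1) * int (card (bnd (Ar 1) (\<rho> r)))"
      using cT[OF r] ge1[of r] by (simp add: of_nat_diff)
    then show ?thesis by (simp add: card_bnd[OF fA] np q_def \<rho>_def)
  qed
  have "int (card S0) + (\<Sum>r\<in>R. int (card (T r))) \<le> int (Sigma1 P deg g)"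
    using main by (metis of_nat_add of_nat_le_iff of_nat_sum)
  moreover have "int (card S0) = int ((num_places P deg 1 + (g - 1)) choose (g - 1))"
    by (simp add: S0_def card_bnd[OF fA] np)
  moreover have "(\<Sum>r\<in>R. int (card (T r))) = (\<Sum>r\<in>R. (int ((num_places P deg r + (g - 1) div r) choose ((g - 1) div r)) - 1)
                          * int ((num_places P deg 1 + (g - 1) mod r) choose ((g - 1) mod r)))"
    by (rule sum.cong[OF refl]) (rule cTi)
  ultimately show ?thesis by simp
qed

theorem theorem3p4:
  fixes P :: "'p set" and deg :: "'p \<Rightarrow> nat" and g :: nat
  assumes deg_pos: "\<forall>x\<in>P. 1 \<le> deg x"
    and fin: "\<forall>r. finite {x\<in>P. deg x = r}"
    and g2: "2 \<le> g"
  shows "(\<forall>m :: nat \<Rightarrow> nat.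
            (\<Sum>r\<in>Delta1 P deg g. r * m r) \<le> g - 1 \<longrightarrow>
            Sigma1 P deg g \<ge>
              (\<Prod>r\<in>Delta1 P deg g. (num_places P deg r + m r) choose (m r)))
       \<and> (\<forall>R. num_places P deg 1 \<ge> 1 \<and> R \<subseteq> Delta1 P deg g - {1} \<longrightarrow>
            int (Sigma1 P deg g) \<ge>
              int ((num_places P deg 1 + (g - 1)) choose (g - 1))
              + (\<Sum>r\<in>R. (int ((num_places P deg r + (g - 1) div r) choose ((g - 1) div r)) - 1)
                          * int ((num_places P deg 1 + (g - 1) mod r) choose ((g - 1) mod r))))"
  using part1[OF deg_pos fin] part2[OF deg_pos fin] by blast

end
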